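(* Let $0<p<1$ and let $\mathcal O(D_p)$ be the universal complex $*$-algebra generated by one element $x$ subject to $x^*x-pxx^*=1-p$. Put $X:=1-xx^*$, and for $n\in\mathbb N$ write $x^{-n}:=(x^* )^n$. Then for every $\mu\in\mathbb Z$, $$x^\mu x^{-\mu}=1+\mathcal Q^p_\mu(X).$$
   Context: For real $r>0$ and $n\ge1$, $Q^r_n(Y)=\sum_{m=1}^n(-1)^m r^{-nm+\frac{m(m+1)}{2}}\binom{n}{m}_{r}Y^m$, where $[0]_r=0$, $[n]_r=1+r+\dots+r^{n-1}$, $[n]_r!=[1]_r\cdots[n]_r$, $[0]_r!=1$, $\binom{n}{m}_r=\frac{[n]_r!}{[m]_r![n-m]_r!}$. For $\mu\in\mathbb Z$ define $\mathcal Q^p_\mu(Y)=Q^p_\mu(Y)$ if $\mu>0$, $\mathcal Q^p_0=0$, and $\mathcal Q^p_\mu(Y)=Q^{p^{-1}}_{-\mu}(pY)$ if $\mu<0$. *)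

theory Defs
  imports Complex_Main
begin

definition qint :: "real \<Rightarrow> nat \<Rightarrow> real" where
  "qint r n = (\<Sum>i<n. r ^ i)"

definition qfact :: "real \<Rightarrow> nat \<Rightarrow> real" where
  "qfact r n = (\<Prod>k=1..n. qint r k)"

definition qbinom :: "real \<Rightarrow> nat \<Rightarrow> nat \<Rightarrow> real" where
  "qbinom r n m = qfact r n / (qfact r m * qfact r (n - m))"

definition Qcoeff :: "real \<Rightarrow> nat \<Rightarrow> nat \<Rightarrow> real" where
  "Qcoeff r n m = (-1) ^ m * r powi (- (int n * int m) + int (m * (m + 1) div 2)) * qbinom r n m"

locale complex_star_algebra =
  fixes smult :: "complex \<Rightarrow> 'a::ring_1 \<Rightarrow> 'a"
    and star :: "'a \<Rightarrow> 'a"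
  assumes smult_add_right: "smult c (a + b) = smult c a + smult c b"
    and smult_add_left: "smult (c + d) a = smult c a + smult d a"
    and smult_smult: "smult c (smult d a) = smult (c * d) a"
    and smult_one: "smult 1 a = a"
    and smult_mult_left: "smult c a * b = smult c (a * b)"
    and smult_mult_right: "a * smult c b = smult c (a * b)"
    and star_add: "star (a + b) = star a + star b"
    and star_smult: "star (smult c a) = smult (cnj c) (star a)"
    and star_mult: "star (a * b) = star b * star a"
    and star_star: "star (star a) = a"

definition Q_eval :: "(complex \<Rightarrow> 'a::ring_1 \<Rightarrow> 'a) \<Rightarrow> real \<Rightarrow> nat \<Rightarrow> 'a \<Rightarrow> 'a" where
  "Q_eval smult r n Y = (\<Sum>m=1..n. smult (complex_of_real (Qcoeff r n m)) (Y ^ m))"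

definition Qcal_eval :: "(complex \<Rightarrow> 'a::ring_1 \<Rightarrow> 'a) \<Rightarrow> real \<Rightarrow> int \<Rightarrow> 'a \<Rightarrow> 'a" where
  "Qcal_eval smult p \<mu> Y =
     (if \<mu> > 0 then Q_eval smult p (nat \<mu>) Y
      else if \<mu> = 0 then 0
      else Q_eval smult (inverse p) (nat (- \<mu>)) (smult (complex_of_real p) Y))"

definition xpow :: "('a::ring_1 \<Rightarrow> 'a) \<Rightarrow> 'a \<Rightarrow> int \<Rightarrow> 'a" where
  "xpow star x \<mu> = (if \<mu> \<ge> 0 then x ^ nat \<mu> else (star x) ^ nat (- \<mu>))"

end

theory Submission
  imports Defs
begin


lemma qint_add: "qint r (a + b) = qint r a + r ^ a * qint r b"
  by (induction b) (simp_all add: qint_def power_add algebra_simps)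

lemma qint_pos: "r > 0 \<Longrightarrow> n \<ge> 1 \<Longrightarrow> qint r n > 0"
proof -
  assume "r > 0" "n \<ge> 1"
  then obtain k where "n = Suc k" by (cases n) auto
  with \<open>r>0\<close> show ?thesis
    by (simp add: qint_def sum.lessThan_Suc_shift sum_nonneg add_pos_nonneg del: sum.lessThan_Suc)
qed

lemma qfact_Suc: "qfact r (Suc n) = qfact r n * qint r (Suc n)"
  by (simp add: qfact_def)

lemma qfact_0[simp]: "qfact r 0 = 1" by (simp add: qfact_def)

lemma qfact_pos: "r > 0 \<Longrightarrow> qfact r n > 0"
  by (induction n) (simp_all add: qfact_Suc qint_pos)

lemma qbinom_0: "r > 0 \<Longrightarrow> qbinom r n 0 = 1"
  using qfact_pos[of r n] by (simp add: qbinom_def)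

lemma qbinom_n: "r > 0 \<Longrightarrow> qbinom r n n = 1"
  using qfact_pos[of r n] by (simp add: qbinom_def)

lemma Qcoeff_0: "r > 0 \<Longrightarrow> Qcoeff r n 0 = 1"
  by (simp add: Qcoeff_def qbinom_0)

lemma qpascal:
  assumes r: "r > 0" and m: "m = Suc j" and n: "n = m + k"
  shows "qbinom r (Suc n) m = qbinom r n m + r ^ (Suc k) * qbinom r n j"
proof -
  have e1: "qfact r m = qfact r j * qint r m" using m qfact_Suc by simp
  have e2: "qfact r (Suc k) = qfact r k * qint r (Suc k)" using qfact_Suc by simp
  have e3: "qint r (Suc n) = qint r (Suc k) + r ^ Suc k * qint r m"
    using qint_add[of r "Suc k" m] n by (simp add: add.commute)
  have p1: "qint r m > 0" "qint r (Suc k) > 0" using qint_pos r m by auto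
  have p2: "qfact r j > 0" "qfact r k > 0" "qfact r n > 0" using qfact_pos r by auto
  have d1: "Suc n - m = Suc k" "n - m = k" "n - j = Suc k" using n m by auto
  show ?thesis
    unfolding qbinom_def d1 qfact_Suc[of r n] e1 e2 e3
    using p1 p2 by (simp add: field_simps)
qed

lemma inv_pow_powi: "(r::real) \<noteq> 0 \<Longrightarrow> inverse r ^ m = r powi (- int m)"
proof -
  have "r powi (- int m) = inverse (r powi int m)" by (rule power_int_minus)
  also have "\<dots> = inverse (r ^ m)" by simp
  also have "\<dots> = inverse r ^ m" by (rule power_inverse[symmetric])
  finally show ?thesis by simp
qed

lemma pa: "(r::real) \<noteq> 0 \<Longrightarrow> r powi a * r powi b = r powi (a + b)"
  using power_int_add[of r a b] by simp

lemma tri: "int (Suc j * (Suc j + 1) div 2) = int (j * (j + 1) div 2) + int (Suc j)"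
proof -
  have "Suc j * (Suc j + 1) = j * (j + 1) + 2 * Suc j" by simp
  hence "Suc j * (Suc j + 1) div 2 = j * (j + 1) div 2 + Suc j" by simp
  thus ?thesis by simp
qed

lemma Qrec:
  assumes r: "r > 0" and m: "m \<le> Suc n"
  shows "Qcoeff r (Suc n) m = (if m \<le> n then Qcoeff r n m * inverse r ^ m else 0)
           - (if m = 0 then 0 else Qcoeff r n (m - 1) * inverse r ^ (m - 1))"
proof (cases m)
  case 0
  then show ?thesis using Qcoeff_0[OF r] by simp
next
  case (Suc j)
  define t where "t = int (j * (j + 1) div 2)"
  have r0: "r \<noteq> 0" using r by simp
  have tt: "int (m * (m + 1) div 2) = t + int m" using tri[of j] Suc t_def by simp
  have tj: "int (j * (j + 1) div 2) = t" using t_def by simp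
  show ?thesis
  proof (cases "m \<le> n")
    case True
    then obtain k where n: "n = m + k" using le_Suc_ex by blast
    have pas: "qbinom r (Suc n) m = qbinom r n m + r ^ (Suc k) * qbinom r n j"
      using qpascal[OF r Suc n] .
    have ex1: "(- (int n * int m) + (t + int m)) + - int m = - (int (Suc n) * int m) + (t + int m)"
      by (simp add: algebra_simps)
    have E1: "r powi (- (int n * int m) + (t + int m)) * inverse r ^ m
        = r powi (- (int (Suc n) * int m) + (t + int m))"
      by (simp only: inv_pow_powi[OF r0] pa[OF r0] ex1)
    have ex2: "(- (int n * int j) + t) + - int j = (- (int (Suc n) * int m) + (t + int m)) + int (Suc k)"
      using n Suc by (simp add: algebra_simps)
    have rk: "r ^ Suc k = r powi int (Suc k)" by (rule power_int_of_nat[symmetric])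
    have E2: "r powi (- (int n * int j) + t) * inverse r ^ j
        = r powi (- (int (Suc n) * int m) + (t + int m)) * r ^ Suc k"
      by (simp only: inv_pow_powi[OF r0] rk pa[OF r0] ex2)
    have "Qcoeff r n m * inverse r ^ m - Qcoeff r n j * inverse r ^ j
       = (-1)^m * (r powi (- (int n * int m) + (t + int m)) * inverse r ^ m) * qbinom r n m
         + (-1)^m * (r powi (- (int n * int j) + t) * inverse r ^ j) * qbinom r n j"
      unfolding Qcoeff_def tt tj using Suc by (simp add: algebra_simps)
    also have "\<dots> = Qcoeff r (Suc n) m"
      unfolding E1 E2 Qcoeff_def tt pas by (simp add: algebra_simps)
    finally show ?thesis using True Suc by simp
  next
    case False
    hence n: "m = Suc n" using m by simp
    hence jn: "j = n" using Suc by simp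
    have ex2: "(- (int n * int j) + t) + - int j = - (int (Suc n) * int m) + (t + int m)"
      using n jn by (simp add: algebra_simps)
    have E2: "r powi (- (int n * int j) + t) * inverse r ^ j
        = r powi (- (int (Suc n) * int m) + (t + int m))"
      by (simp only: inv_pow_powi[OF r0] pa[OF r0] ex2)
    have "- (Qcoeff r n j * inverse r ^ j)
       = (-1)^m * (r powi (- (int n * int j) + t) * inverse r ^ j)"
      unfolding Qcoeff_def tj using Suc jn qbinom_n[OF r, of n] by (simp add: algebra_simps)
    also have "\<dots> = Qcoeff r (Suc n) m"
      unfolding E2 Qcoeff_def tt using n qbinom_n[OF r, of "Suc n"] by (simp add: algebra_simps)
    finally show ?thesis using False Suc by simp
  qed
qed


context complex_star_algebra begin

lemma smult_zero_left[simp]: "smult 0 a = 0"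
  using smult_add_left[of 0 0 a] by simp
lemma smult_zero_right[simp]: "smult c 0 = 0"
  using smult_add_right[of c 0 0] by simp
lemma smult_minus_right: "smult c (- a) = - smult c a"
  using smult_add_right[of c a "- a"] by (metis minus_unique right_minus smult_zero_right)
lemma smult_diff_right: "smult c (a - b) = smult c a - smult c b"
  using smult_add_right[of c a "- b"] by (simp add: smult_minus_right)
lemma smult_minus_left: "smult (- c) a = - smult c a"
  using smult_add_left[of c "- c" a] by (metis minus_unique right_minus smult_zero_left)
lemma smult_diff_left: "smult (c - d) a = smult c a - smult d a"
  using smult_add_left[of c "- d" a] by (simp add: smult_minus_left)
lemma smult_sum_right: "smult c (sum f A) = (\<Sum>i\<in>A. smult c (f i))"
  by (induction A rule: infinite_finite_induct) (simp_all add: smult_add_right)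
lemma smult_power: "(smult c a) ^ k = smult (c ^ k) (a ^ k)"
  by (induction k) (simp_all add: smult_one smult_mult_left smult_mult_right smult_smult power_commutes)

abbreviation sm :: "real \<Rightarrow> 'a \<Rightarrow> 'a" where "sm c a \<equiv> smult (complex_of_real c) a"

lemma sum_shift:
  "(\<Sum>m\<le>N. sm (d m) (Y ^ m)) * (1 - sm t Y)
   = (\<Sum>m\<le>Suc N. sm ((if m \<le> N then d m else 0) - (if m = 0 then 0 else t * d (m - 1))) (Y ^ m))"
proof -
  have "\<And>m. sm (d m) (Y ^ m) * (1 - sm t Y) = sm (d m) (Y ^ m) - sm (t * d m) (Y ^ Suc m)"
    by (simp add: right_diff_distrib smult_mult_left smult_mult_right smult_smult power_commutes mult.commute)
  hence s1: "(\<Sum>m\<le>N. sm (d m) (Y ^ m)) * (1 - sm t Y)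
      = (\<Sum>m\<le>N. sm (d m) (Y ^ m)) - (\<Sum>m\<le>N. sm (t * d m) (Y ^ Suc m))"
    by (simp add: sum_distrib_right sum_subtractf)
  have s2: "(\<Sum>m\<le>N. sm (d m) (Y ^ m)) = (\<Sum>m\<le>Suc N. sm (if m \<le> N then d m else 0) (Y ^ m))"
    by (simp add: sum.atMost_Suc)
  have s3: "(\<Sum>m\<le>N. sm (t * d m) (Y ^ Suc m))
      = (\<Sum>m\<le>Suc N. sm (if m = 0 then 0 else t * d (m - 1)) (Y ^ m))"
    unfolding sum.atMost_Suc_shift[of _ N] by simp
  show ?thesis
    unfolding s1 unfolding s2 s3 by (simp only: of_real_diff smult_diff_left sum_subtractf)
qed

end


locale dpalg = complex_star_algebra smult star
  for smult :: "complex \<Rightarrow> 'a::ring_1 \<Rightarrow> 'a" and star :: "'a \<Rightarrow> 'a" +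
  fixes x :: 'a and p :: real
  assumes p_pos: "0 < p"
    and rel: "star x * x - smult (complex_of_real p) (x * star x) = smult (complex_of_real (1 - p)) 1"
begin

abbreviation XX :: 'a where "XX \<equiv> 1 - x * star x"

lemma sm1: "sm 1 a = a" by (simp add: smult_one)

lemma sx_x: "star x * x = 1 - sm p XX"
proof -
  have "star x * x = sm p (x * star x) + sm (1 - p) 1" using rel by (simp add: algebra_simps)
  also have "\<dots> = 1 - sm p XX"
    by (simp add: smult_diff_right smult_diff_left smult_one)
  finally show ?thesis .
qed

lemma X_x: "XX * x = sm p (x * XX)"
proof -
  have "XX * x = x - x * (star x * x)" by (simp add: algebra_simps)
  also have "\<dots> = x * sm p XX" unfolding sx_x by (simp add: algebra_simps)
  finally show ?thesis by (simp add: smult_mult_right)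
qed

lemma sx_X: "star x * XX = sm p (XX * star x)"
proof -
  have "star x * XX = star x - (star x * x) * star x" by (simp add: algebra_simps)
  also have "\<dots> = sm p XX * star x" unfolding sx_x by (simp add: algebra_simps)
  finally show ?thesis by (simp add: smult_mult_left)
qed

lemma Xk_x: "XX ^ k * x = sm (p ^ k) (x * XX ^ k)"
proof (induction k)
  case 0 then show ?case by (simp add: smult_one)
next
  case (Suc k)
  have "XX ^ Suc k * x = XX ^ k * (XX * x)" by (simp only: power_Suc2 power_Suc mult.assoc)
  also have "\<dots> = sm p (XX ^ k * x * XX)" by (simp add: X_x smult_mult_right mult.assoc)
  also have "\<dots> = sm (p ^ Suc k) (x * XX ^ Suc k)"
    by (simp add: Suc smult_mult_left smult_smult power_Suc2 mult.assoc power_commutes)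
  finally show ?case .
qed

lemma x_Xk: "x * XX ^ k = sm (inverse p ^ k) (XX ^ k * x)"
proof -
  have "sm (inverse p ^ k) (XX ^ k * x) = sm (inverse p ^ k * p ^ k) (x * XX ^ k)"
    by (simp add: Xk_x smult_smult)
  also have "inverse p ^ k * p ^ k = 1" using p_pos by (simp add: power_mult_distrib[symmetric])
  finally show ?thesis by (simp add: smult_one)
qed

lemma sx_Xk: "star x * XX ^ k = sm (p ^ k) (XX ^ k * star x)"
proof (induction k)
  case 0 then show ?case by (simp add: smult_one)
next
  case (Suc k)
  have "star x * XX ^ Suc k = (star x * XX) * XX ^ k" by (simp add: mult.assoc)
  also have "\<dots> = sm p (XX * (star x * XX ^ k))" by (simp add: sx_X smult_mult_left mult.assoc)
  also have "\<dots> = sm (p ^ Suc k) (XX ^ Suc k * star x)"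
    by (simp add: Suc smult_mult_right smult_smult mult.assoc)
  finally show ?case .
qed

lemma x_conj: "x * sm c (XX ^ k) * star x = sm (c * inverse p ^ k) (XX ^ k) * (1 - sm 1 XX)"
proof -
  have "x * sm c (XX ^ k) * star x = sm c (x * XX ^ k * star x)"
    by (simp add: smult_mult_left smult_mult_right)
  also have "\<dots> = sm c (sm (inverse p ^ k) (XX ^ k * (x * star x)))"
    by (simp add: x_Xk smult_mult_left mult.assoc)
  also have "\<dots> = sm c (sm (inverse p ^ k) (XX ^ k * (1 - sm 1 XX)))" by (simp add: smult_one)
  finally show ?thesis by (simp add: smult_smult smult_mult_left)
qed

lemma sx_conj: "star x * sm c (XX ^ k) * x = sm (c * p ^ k) (XX ^ k) * (1 - sm p XX)"
proof -
  have "star x * sm c (XX ^ k) * x = sm c (star x * XX ^ k * x)"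
    by (simp add: smult_mult_left smult_mult_right)
  also have "\<dots> = sm c (sm (p ^ k) (XX ^ k * (star x * x)))"
    by (simp add: sx_Xk smult_mult_left mult.assoc)
  finally show ?thesis by (simp add: smult_smult smult_mult_left sx_x)
qed

lemma pos: "x ^ n * star x ^ n = (\<Sum>m\<le>n. sm (Qcoeff p n m) (XX ^ m))"
proof (induction n)
  case 0 then show ?case using Qcoeff_0[OF p_pos] by (simp add: smult_one)
next
  case (Suc n)
  have "x ^ Suc n * star x ^ Suc n = x * (x ^ n * star x ^ n) * star x"
    by (simp only: power_Suc[of x] power_Suc2[of "star x"] mult.assoc)
  also have "\<dots> = (\<Sum>m\<le>n. sm (Qcoeff p n m * inverse p ^ m) (XX ^ m)) * (1 - sm 1 XX)"
    unfolding Suc by (simp add: sum_distrib_left sum_distrib_right x_conj)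
  also have "\<dots> = (\<Sum>m\<le>Suc n. sm (Qcoeff p (Suc n) m) (XX ^ m))"
    unfolding sum_shift
    by (rule sum.cong) (simp_all add: Qrec[OF p_pos])
  finally show ?case .
qed

lemma neg: "star x ^ n * x ^ n = (\<Sum>m\<le>n. sm (Qcoeff (inverse p) n m * p ^ m) (XX ^ m))"
proof (induction n)
  case 0 then show ?case using Qcoeff_0[of "inverse p"] p_pos by (simp add: smult_one)
next
  case (Suc n)
  have ip: "inverse p > 0" using p_pos by simp
  have "star x ^ Suc n * x ^ Suc n = star x * (star x ^ n * x ^ n) * x"
    by (simp only: power_Suc[of "star x"] power_Suc2[of x] mult.assoc)
  also have "\<dots> = (\<Sum>m\<le>n. sm (Qcoeff (inverse p) n m * p ^ m * p ^ m) (XX ^ m)) * (1 - sm p XX)"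
    unfolding Suc sum_distrib_left sum_distrib_right sx_conj by (simp add: mult.assoc)
  also have "\<dots> = (\<Sum>m\<le>Suc n. sm (Qcoeff (inverse p) (Suc n) m * p ^ m) (XX ^ m))"
    unfolding sum_shift
  proof (rule sum.cong)
    fix m assume "m \<in> {..Suc n}"
    hence m: "m \<le> Suc n" by simp
    show "sm ((if m \<le> n then Qcoeff (inverse p) n m * p ^ m * p ^ m else 0) -
          (if m = 0 then 0 else p * (Qcoeff (inverse p) n (m - 1) * p ^ (m - 1) * p ^ (m - 1)))) (XX ^ m)
        = sm (Qcoeff (inverse p) (Suc n) m * p ^ m) (XX ^ m)"
    proof -
      have q: "Qcoeff (inverse p) (Suc n) m = (if m \<le> n then Qcoeff (inverse p) n m * p ^ m else 0)
           - (if m = 0 then 0 else Qcoeff (inverse p) n (m - 1) * p ^ (m - 1))"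
        using Qrec[OF ip m] p_pos by (simp add: power_inverse)
      have "(if m \<le> n then Qcoeff (inverse p) n m * p ^ m * p ^ m else 0) -
          (if m = 0 then 0 else p * (Qcoeff (inverse p) n (m - 1) * p ^ (m - 1) * p ^ (m - 1)))
          = Qcoeff (inverse p) (Suc n) m * p ^ m"
        unfolding q by (cases m) (simp_all add: algebra_simps)
      thus ?thesis by simp
    qed
  qed simp
  finally show ?case .
qed

end


context complex_star_algebra begin
lemma Q_eval_sum: "r > 0 \<Longrightarrow> 1 + Q_eval smult r n Y = (\<Sum>m\<le>n. sm (Qcoeff r n m) (Y ^ m))"
  unfolding Q_eval_def atMost_atLeast0
  by (simp add: sum.atLeast_Suc_atMost Qcoeff_0 smult_one)

lemma Q_eval_sm: "Q_eval smult r n (sm c Y) = (\<Sum>m=1..n. sm (Qcoeff r n m * c ^ m) (Y ^ m))"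
  unfolding Q_eval_def by (simp add: smult_power smult_smult of_real_power[symmetric] del: of_real_power)
end

theorem mainTheorem5:
  fixes smult :: "complex \<Rightarrow> 'a::ring_1 \<Rightarrow> 'a"
    and star :: "'a \<Rightarrow> 'a"
    and x :: 'a
    and p :: real
    and \<mu> :: int
  assumes alg: "complex_star_algebra smult star"
    and p_pos: "0 < p" and p_lt1: "p < 1"
    and rel: "star x * x - smult (complex_of_real p) (x * star x) = smult (complex_of_real (1 - p)) 1"
  shows "xpow star x \<mu> * xpow star x (- \<mu>)
           = 1 + Qcal_eval smult p \<mu> (1 - x * star x)"
proof -
  interpret dpalg smult star x p
    using alg p_pos rel by (simp add: dpalg_def dpalg_axioms_def)
  consider "\<mu> > 0" | "\<mu> = 0" | "\<mu> < 0" by linarith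
  then show ?thesis
  proof cases
    case 1
    define n where "n = nat \<mu>"
    have "xpow star x \<mu> * xpow star x (- \<mu>) = x ^ n * star x ^ n"
      using 1 by (simp add: xpow_def n_def)
    also have "\<dots> = 1 + Q_eval smult p n XX" using pos Q_eval_sum[OF p_pos] by simp
    finally show ?thesis using 1 by (simp add: Qcal_eval_def n_def)
  next
    case 2
    then show ?thesis by (simp add: xpow_def Qcal_eval_def)
  next
    case 3
    define n where "n = nat (- \<mu>)"
    have ip: "inverse p > 0" using p_pos by simp
    have "xpow star x \<mu> * xpow star x (- \<mu>) = star x ^ n * x ^ n"
      using 3 by (simp add: xpow_def n_def)
    also have "\<dots> = (\<Sum>m\<le>n. sm (Qcoeff (inverse p) n m * p ^ m) (XX ^ m))" by (rule neg)
    also have "\<dots> = 1 + Q_eval smult (inverse p) n (sm p XX)"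
      unfolding Q_eval_sm atMost_atLeast0
      by (simp add: sum.atLeast_Suc_atMost Qcoeff_0[OF ip] smult_one)
    finally show ?thesis using 3 by (simp add: Qcal_eval_def n_def)
  qed
qed

end
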